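(* Fix $\alpha>0$, $\gamma\in(0,1)$, a constant $\bar\rho_i>0$, a finite nonempty multiset $D_{\rho_i}$ of samples $x=(s,a_i,\mathbf{a}_{-i},s')$ with $s,s'\in S$, and a distribution $p_0$ on $S$. For $\nu_i:S\to\mathbb{R}$ let $$\hat e_{\nu_i}(x)=r(s,a_i,\mathbf{a}_{-i})-\alpha\log\frac{\boldsymbol{\pi}_{-i}(\mathbf{a}_{-i}\mid s)}{\boldsymbol{\pi}^D_{-i}(\mathbf{a}_{-i}\mid s,a_i)}+\gamma\nu_i(s')-\nu_i(s),$$ $$L(\nu_i):=\bar\rho_i\,\alpha\,\hat{\mathbf{E}}_{x\in D_{\rho_i}}\Big[\exp\Big(\tfrac1\alpha\hat e_{\nu_i}(x)-1\Big)\Big]+(1-\gamma)\mathbb{E}_{s_0\sim p_0}[\nu_i(s_0)],$$ $$\tilde{\mathcal{L}}(\nu_i):=\alpha\log\Big(\bar\rho_i\,\hat{\mathbf{E}}_{x\in D_{\rho_i}}\Big[\exp\Big(\tfrac1\alpha\hat e_{\nu_i}(x)\Big)\Big]\Big)+(1-\gamma)\mathbb{E}_{s_0\sim p_0}[\nu_i(s_0)].$$ Then any minimizer $\nu_i^*$ of $L$ (over all functions $S\to\mathbb{R}$) is also a minimizer of $\tilde{\mathcal{L}}$.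
   Context: $\hat{\mathbf{E}}_{x\in D}[f(x)]:=\frac{1}{|D|}\sum_{x\in D}f(x)$ is the empirical average over a finite multiset $D$. $r$ is a real-valued reward; $\boldsymbol{\pi}_{-i}(\mathbf{a}_{-i}\mid s)$ and $\boldsymbol{\pi}^D_{-i}(\mathbf{a}_{-i}\mid s,a_i)$ are fixed conditional probability distributions, positive on the samples of $D_{\rho_i}$. *)

theory Defs
  imports "HOL-Probability.Probability" "HOL-Library.Multiset"
begin

definition emp_avg :: "'x multiset \<Rightarrow> ('x \<Rightarrow> real) \<Rightarrow> real" where
  "emp_avg D f = (\<Sum>x\<in>#D. f x) / real (size D)"

text \<open>Sample x = (s, a_i, a_{-i}, s').  piM a s = pi_{-i}(a | s), piD a s ai = piM^D_{-i}(a | s, a_i).\<close>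
definition ehat ::
  "real \<Rightarrow> real \<Rightarrow> ('s \<Rightarrow> 'a \<Rightarrow> 'b \<Rightarrow> real) \<Rightarrow> ('b \<Rightarrow> 's \<Rightarrow> real)
   \<Rightarrow> ('b \<Rightarrow> 's \<Rightarrow> 'a \<Rightarrow> real) \<Rightarrow> ('s \<Rightarrow> real) \<Rightarrow> ('s \<times> 'a \<times> 'b \<times> 's) \<Rightarrow> real" where
  "ehat \<alpha> \<gamma> r piM piD \<nu> x = (case x of (s, ai, am, s') \<Rightarrow>
     r s ai am - \<alpha> * ln (piM am s / piD am s ai) + \<gamma> * \<nu> s' - \<nu> s)"

definition L_obj ::
  "real \<Rightarrow> real \<Rightarrow> real \<Rightarrow> ('s \<times> 'a \<times> 'b \<times> 's) multiset \<Rightarrow> 's pmf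
   \<Rightarrow> ('s \<Rightarrow> 'a \<Rightarrow> 'b \<Rightarrow> real) \<Rightarrow> ('b \<Rightarrow> 's \<Rightarrow> real)
   \<Rightarrow> ('b \<Rightarrow> 's \<Rightarrow> 'a \<Rightarrow> real) \<Rightarrow> ('s \<Rightarrow> real) \<Rightarrow> real" where
  "L_obj \<alpha> \<gamma> \<rho> D p0 r piM piD \<nu> =
     \<rho> * \<alpha> * emp_avg D (\<lambda>x. exp (ehat \<alpha> \<gamma> r piM piD \<nu> x / \<alpha> - 1))
     + (1 - \<gamma>) * measure_pmf.expectation p0 \<nu>"

definition Lt_obj ::
  "real \<Rightarrow> real \<Rightarrow> real \<Rightarrow> ('s \<times> 'a \<times> 'b \<times> 's) multiset \<Rightarrow> 's pmf
   \<Rightarrow> ('s \<Rightarrow> 'a \<Rightarrow> 'b \<Rightarrow> real) \<Rightarrow> ('b \<Rightarrow> 's \<Rightarrow> real)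
   \<Rightarrow> ('b \<Rightarrow> 's \<Rightarrow> 'a \<Rightarrow> real) \<Rightarrow> ('s \<Rightarrow> real) \<Rightarrow> real" where
  "Lt_obj \<alpha> \<gamma> \<rho> D p0 r piM piD \<nu> =
     \<alpha> * ln (\<rho> * emp_avg D (\<lambda>x. exp (ehat \<alpha> \<gamma> r piM piD \<nu> x / \<alpha>)))
     + (1 - \<gamma>) * measure_pmf.expectation p0 \<nu>"

end

theory Submission
  imports Defs
begin

lemma summ_pos:
  fixes f :: "'x \<Rightarrow> real"
  assumes "\<And>x. f x > 0"
  shows "M \<noteq> {#} \<Longrightarrow> (\<Sum>x\<in>#M. f x) > 0"
proof (induction M)
  case empty then show ?case by simp
next
  case (add x M)
  show ?case
  proof (cases "M = {#}")
    case True then show ?thesis using assms by simp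
  next
    case False then show ?thesis using add assms by (simp add: add_pos_pos)
  qed
qed

lemma emp_avg_scale: "emp_avg D (\<lambda>x. f x * k) = emp_avg D f * k"
  unfolding emp_avg_def by (simp add: sum_mset_distrib_right)

lemma emp_avg_pos:
  assumes "D \<noteq> {#}" "\<And>x. f x > 0"
  shows "emp_avg D f > 0"
proof -
  have "size D > 0" using assms(1) by (simp add: nonempty_has_size)
  then show ?thesis unfolding emp_avg_def using summ_pos[OF assms(2) assms(1)] by simp
qed

theorem lemma5:
  fixes \<alpha> \<gamma> \<rho> :: real
    and D :: "('s \<times> 'a \<times> 'b \<times> 's) multiset"
    and p0 :: "'s pmf"
    and r :: "'s \<Rightarrow> 'a \<Rightarrow> 'b \<Rightarrow> real"
    and piM :: "'b \<Rightarrow> 's \<Rightarrow> real"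
    and piD :: "'b \<Rightarrow> 's \<Rightarrow> 'a \<Rightarrow> real"
    and \<nu>star :: "'s \<Rightarrow> real"
  assumes "\<alpha> > 0" and "0 < \<gamma>" and "\<gamma> < 1" and "\<rho> > 0"
    and "D \<noteq> {#}"
    and "\<forall>(s, ai, am, s') \<in> set_mset D. piM am s > 0 \<and> piD am s ai > 0"
    and "integrable (measure_pmf p0) \<nu>star"
    and "\<forall>\<nu>. integrable (measure_pmf p0) \<nu> \<longrightarrow>
           L_obj \<alpha> \<gamma> \<rho> D p0 r piM piD \<nu>star \<le> L_obj \<alpha> \<gamma> \<rho> D p0 r piM piD \<nu>"
  shows "\<forall>\<nu>. integrable (measure_pmf p0) \<nu> \<longrightarrow>
           Lt_obj \<alpha> \<gamma> \<rho> D p0 r piM piD \<nu>star \<le> Lt_obj \<alpha> \<gamma> \<rho> D p0 r piM piD \<nu>"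
proof (intro allI impI)
  fix \<nu> :: "'s \<Rightarrow> real"
  assume int: "integrable (measure_pmf p0) \<nu>"
  define A where "A = (\<lambda>\<mu>. emp_avg D (\<lambda>x. exp (ehat \<alpha> \<gamma> r piM piD \<mu> x / \<alpha>)))"
  define E where "E = (\<lambda>\<mu>::'s\<Rightarrow>real. measure_pmf.expectation p0 \<mu>)"
  have Apos: "A \<mu> > 0" for \<mu> unfolding A_def by (rule emp_avg_pos[OF assms(5)]) simp
  have Leq: "L_obj \<alpha> \<gamma> \<rho> D p0 r piM piD \<mu> = \<rho> * \<alpha> * A \<mu> / exp 1 + (1 - \<gamma>) * E \<mu>" for \<mu>
  proof -
    have "(\<lambda>x. exp (ehat \<alpha> \<gamma> r piM piD \<mu> x / \<alpha> - 1)) = (\<lambda>x. exp (ehat \<alpha> \<gamma> r piM piD \<mu> x / \<alpha>) * inverse (exp 1))"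
      by (simp add: exp_diff field_simps)
    then have "emp_avg D (\<lambda>x. exp (ehat \<alpha> \<gamma> r piM piD \<mu> x / \<alpha> - 1)) = A \<mu> * inverse (exp 1)"
      unfolding A_def by (simp only: emp_avg_scale)
    then show ?thesis unfolding L_obj_def E_def by (simp add: field_simps)
  qed
  have Lteq: "Lt_obj \<alpha> \<gamma> \<rho> D p0 r piM piD \<mu> = \<alpha> * ln (\<rho> * A \<mu>) + (1 - \<gamma>) * E \<mu>" for \<mu>
    unfolding Lt_obj_def A_def E_def by simp
  have ge: "Lt_obj \<alpha> \<gamma> \<rho> D p0 r piM piD \<mu> \<le> L_obj \<alpha> \<gamma> \<rho> D p0 r piM piD \<mu>" for \<mu>
  proof -
    have y: "\<rho> * A \<mu> > 0" using Apos assms(4) by simp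
    have "ln (\<rho> * A \<mu> / exp 1) \<le> \<rho> * A \<mu> / exp 1 - 1" by (rule ln_le_minus_one) (use y in simp)
    then have "ln (\<rho> * A \<mu>) \<le> \<rho> * A \<mu> / exp 1" using y Apos[of \<mu>] assms(4) by (simp add: ln_div)
    then have "\<alpha> * ln (\<rho> * A \<mu>) \<le> \<alpha> * (\<rho> * A \<mu> / exp 1)" using assms(1) by (metis less_eq_real_def mult_left_mono)
    then show ?thesis unfolding Leq Lteq by (simp add: mult_ac)
  qed
  define t where "t = \<alpha> * (ln (\<rho> * A \<nu>) - 1)"
  define c where "c = t / (1 - \<gamma>)"
  define \<nu>' where "\<nu>' = (\<lambda>s. \<nu> s + c)"
  have int': "integrable (measure_pmf p0) \<nu>'" unfolding \<nu>'_def using int by simp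
  have tc: "(1 - \<gamma>) * c = t" unfolding c_def using assms(3) by simp
  have eh: "ehat \<alpha> \<gamma> r piM piD \<nu>' x = ehat \<alpha> \<gamma> r piM piD \<nu> x - t" for x
    using tc by (cases x) (simp add: ehat_def \<nu>'_def algebra_simps)
  have A': "A \<nu>' = A \<nu> * exp (- t / \<alpha>)"
  proof -
    have "(\<lambda>x. exp (ehat \<alpha> \<gamma> r piM piD \<nu>' x / \<alpha>)) = (\<lambda>x. exp (ehat \<alpha> \<gamma> r piM piD \<nu> x / \<alpha>) * exp (- t / \<alpha>))"
      by (simp add: eh diff_divide_distrib exp_diff exp_minus field_simps)
    then show ?thesis unfolding A_def by (simp only: emp_avg_scale)
  qed
  have ex: "exp (- t / \<alpha>) = exp 1 / (\<rho> * A \<nu>)"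
  proof -
    have "- t / \<alpha> = 1 - ln (\<rho> * A \<nu>)" unfolding t_def using assms(1) by (simp add: field_simps)
    then show ?thesis using Apos assms(4) by (simp add: exp_diff)
  qed
  have E': "E \<nu>' = E \<nu> + c"
    unfolding E_def \<nu>'_def using int by (simp add: Bochner_Integration.integral_add)
  have "L_obj \<alpha> \<gamma> \<rho> D p0 r piM piD \<nu>' = \<alpha> + (1 - \<gamma>) * E \<nu> + t"
    unfolding Leq A' ex E' using Apos[of \<nu>] assms(4) tc by (simp add: field_simps)
  also have "\<dots> = Lt_obj \<alpha> \<gamma> \<rho> D p0 r piM piD \<nu>" unfolding Lteq t_def by (simp add: algebra_simps)
  finally have eq: "L_obj \<alpha> \<gamma> \<rho> D p0 r piM piD \<nu>' = Lt_obj \<alpha> \<gamma> \<rho> D p0 r piM piD \<nu>" .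
  show "Lt_obj \<alpha> \<gamma> \<rho> D p0 r piM piD \<nu>star \<le> Lt_obj \<alpha> \<gamma> \<rho> D p0 r piM piD \<nu>"
    using ge[of \<nu>star] assms(8) int' eq by fastforce
qed

end
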